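(* Let $A$ and $B$ be self-adjoint operators on the same complex Hilbert space, with $B$ bounded, non-negative and $B \neq 0$. Then the set $\mathbb{R}\setminus\bigcup_{t\in\mathbb{R}}\sigma(A+tB)$ is at most countable.
   Context: $\sigma(T)$ denotes the spectrum of an operator $T$. $A$ may be unbounded; $A+tB$ is defined on the domain of $A$. *)

theory Defs
  imports "HOL-Analysis.Analysis"
begin

text \<open>A complex Hilbert space is modelled as a real Hilbert space (type class
  real_inner + complete_space) together with a complex structure J
  (multiplication by the imaginary unit), which is real-linear, satisfies
  J (J x) = - x and is an isometry for the real inner product.\<close>

definition complex_structure :: "('h::{real_inner,complete_space} \<Rightarrow> 'h) \<Rightarrow> bool" where
  "complex_structure J \<longleftrightarrow> linear J \<and> (\<forall>x. J (J x) = - x) \<and> (\<forall>x y. inner (J x) (J y) = inner x y)"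

definition cscale :: "('h::real_inner \<Rightarrow> 'h) \<Rightarrow> complex \<Rightarrow> 'h \<Rightarrow> 'h" where
  "cscale J c x = Re c *\<^sub>R x + Im c *\<^sub>R J x"

text \<open>Complex inner product (linear in the first, conjugate-linear in the second argument).\<close>
definition cinner :: "('h::real_inner \<Rightarrow> 'h) \<Rightarrow> 'h \<Rightarrow> 'h \<Rightarrow> complex" where
  "cinner J x y = Complex (inner x y) (inner x (J y))"

definition csubspace :: "('h::real_inner \<Rightarrow> 'h) \<Rightarrow> 'h set \<Rightarrow> bool" where
  "csubspace J D \<longleftrightarrow> 0 \<in> D \<and> (\<forall>x\<in>D. \<forall>y\<in>D. x + y \<in> D) \<and> (\<forall>c. \<forall>x\<in>D. cscale J c x \<in> D)"

definition clinear_on :: "('h::real_inner \<Rightarrow> 'h) \<Rightarrow> 'h set \<Rightarrow> ('h \<Rightarrow> 'h) \<Rightarrow> bool" where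
  "clinear_on J D T \<longleftrightarrow> csubspace J D \<and>
     (\<forall>x\<in>D. \<forall>y\<in>D. T (x + y) = T x + T y) \<and> (\<forall>c. \<forall>x\<in>D. T (cscale J c x) = cscale J c (T x))"

text \<open>Self-adjoint operator: densely defined, linear, and equal to its adjoint
  (same domain as the adjoint, and symmetric).\<close>
definition self_adjoint :: "('h::{real_inner,complete_space} \<Rightarrow> 'h) \<Rightarrow> 'h set \<Rightarrow> ('h \<Rightarrow> 'h) \<Rightarrow> bool" where
  "self_adjoint J D T \<longleftrightarrow> clinear_on J D T \<and> closure D = UNIV \<and>
     (\<forall>y. y \<in> D \<longleftrightarrow> (\<exists>z. \<forall>x\<in>D. cinner J (T x) y = cinner J x z)) \<and>
     (\<forall>x\<in>D. \<forall>y\<in>D. cinner J (T x) y = cinner J x (T y))"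

definition bounded_clinear_op :: "('h::{real_inner,complete_space} \<Rightarrow> 'h) \<Rightarrow> ('h \<Rightarrow> 'h) \<Rightarrow> bool" where
  "bounded_clinear_op J R \<longleftrightarrow> bounded_linear R \<and> (\<forall>c y. R (cscale J c y) = cscale J c (R y))"

definition op_spectrum :: "('h::{real_inner,complete_space} \<Rightarrow> 'h) \<Rightarrow> 'h set \<Rightarrow> ('h \<Rightarrow> 'h) \<Rightarrow> complex set" where
  "op_spectrum J D T = {l. \<not> (\<exists>R. bounded_clinear_op J R \<and>
      (\<forall>y. R y \<in> D \<and> T (R y) - cscale J l (R y) = y) \<and>
      (\<forall>x\<in>D. R (T x - cscale J l x) = x))}"

end

theory Submission
  imports Defs "HOL-Real_Asymp.Real_Asymp"
begin

lemma quad_disc: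
  fixes a b c :: real
  assumes c: "0 \<le> c" and h: "\<And>l. 0 \<le> a + 2*l*b + l^2*c"
  shows "b^2 \<le> a*c"
proof (cases "c = 0")
  case True
  show ?thesis
  proof (rule ccontr)
    assume "\<not> ?thesis"
    then have "b \<noteq> 0" using True by auto
    have "0 \<le> a + 2*(-(a+1)/(2*b))*b" using h[of "-(a+1)/(2*b)"] True by simp
    also have "\<dots> = -1" using \<open>b \<noteq> 0\<close> by (simp add: field_simps)
    finally show False by simp
  qed
next
  case False
  then have cp: "c > 0" using c by simp
  have "0 \<le> a + 2*(-b/c)*b + (-b/c)^2*c" by (rule h)
  also have "\<dots> = a - b^2/c" using cp by (simp add: field_simps power2_eq_square)
  finally have "b^2/c \<le> a" by simp
  then show ?thesis using cp by (simp add: field_simps mult.commute)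
qed

lemma cs_form:
  fixes P :: "'a::real_inner \<Rightarrow> 'a"
  assumes lin: "bounded_linear P"
    and sym: "\<And>x y. inner (P x) y = inner x (P y)"
    and pos: "\<And>x. 0 \<le> inner (P x) x"
  shows "(inner (P x) y)^2 \<le> inner (P x) x * inner (P y) y"
proof (rule quad_disc[OF pos])
  fix l :: real
  have "0 \<le> inner (P (x + l *\<^sub>R y)) (x + l *\<^sub>R y)" by (rule pos)
  also have "\<dots> = inner (P x) x + l * inner (P x) y + l * inner (P y) x + l^2 * inner (P y) y"
    by (simp add: linear_simps[OF lin] inner_add_left inner_add_right power2_eq_square algebra_simps)
  also have "inner (P y) x = inner (P x) y" using sym[of y x] by (simp add: inner_commute)
  finally show "0 \<le> inner (P x) x + 2 * l * inner (P x) y + l\<^sup>2 * inner (P y) y" by simp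
qed

lemma normsq_bound:
  fixes P :: "'a::real_inner \<Rightarrow> 'a"
  assumes lin: "bounded_linear P"
    and sym: "\<And>x y. inner (P x) y = inner x (P y)"
    and pos: "\<And>x. 0 \<le> inner (P x) x"
  shows "\<exists>K>0. \<forall>x. (norm (P x))^2 \<le> K * inner (P x) x"
proof -
  obtain K where K: "K > 0" "\<And>x. norm (P x) \<le> norm x * K"
    using bounded_linear.pos_bounded[OF lin] by blast
  have "(norm (P x))^2 \<le> K * inner (P x) x" for x
  proof (cases "P x = 0")
    case True then show ?thesis using pos[of x] K by simp
  next
    case False
    have "(inner (P x) (P x))^2 \<le> inner (P x) x * inner (P (P x)) (P x)"
      by (rule cs_form[OF lin sym pos])
    also have "inner (P (P x)) (P x) \<le> K * (norm (P x))^2"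
    proof -
      have "inner (P (P x)) (P x) \<le> norm (P (P x)) * norm (P x)" by (rule norm_cauchy_schwarz)
      also have "\<dots> \<le> (norm (P x) * K) * norm (P x)" by (rule mult_right_mono[OF K(2)]) simp
      finally show ?thesis by (simp add: power2_eq_square algebra_simps)
    qed
    then have "inner (P x) x * inner (P (P x)) (P x) \<le> inner (P x) x * (K * (norm (P x))^2)"
      using pos[of x] by (rule mult_left_mono) 
    finally have "((norm (P x))^2)^2 \<le> (K * inner (P x) x) * (norm (P x))^2"
      by (simp add: power2_norm_eq_inner[symmetric] algebra_simps)
    moreover have "(norm (P x))^2 > 0" using False by simp
    ultimately show ?thesis by (metis mult_right_le_imp_le power2_eq_square)
  qed
  then show ?thesis using K by blast
qed

lemma part1:
  fixes B R :: "'a::real_inner \<Rightarrow> 'a"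
  assumes linB: "bounded_linear B"
    and symB: "\<And>x y. inner (B x) y = inner x (B y)"
    and posB: "\<And>x. 0 \<le> inner (B x) x"
    and linR: "bounded_linear R"
    and symR: "\<And>x y. inner (R x) y = inner x (R y)"
    and x0: "inner (R (B x0)) (B x0) > 0"
  shows "\<exists>M>0. \<exists>xs. (\<lambda>n. M *\<^sub>R B (xs n) - B (R (B (xs n)))) \<longlonglongrightarrow> 0
            \<and> (\<exists>c>0. \<forall>n. c \<le> (norm (B (xs n)))^2)"
proof -
  define q where "q x = inner (R (B x)) (B x)" for x
  obtain KB where KB: "KB > 0" "\<And>x. (norm (B x))^2 \<le> KB * inner (B x) x"
    using normsq_bound[OF linB symB posB] by blast
  obtain KR where KR: "KR > 0" "\<And>x. norm (R x) \<le> norm x * KR"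
    using bounded_linear.pos_bounded[OF linR] by blast
  have qR: "q x \<le> KR * (norm (B x))^2" for x
  proof -
    have "q x \<le> norm (R (B x)) * norm (B x)" unfolding q_def by (rule norm_cauchy_schwarz)
    also have "\<dots> \<le> (norm (B x) * KR) * norm (B x)" by (rule mult_right_mono[OF KR(2)]) simp
    finally show ?thesis by (simp add: power2_eq_square algebra_simps)
  qed
  have qB: "q x \<le> KR * KB * inner (B x) x" for x
  proof -
    have "q x \<le> KR * (norm (B x))^2" by (rule qR)
    also have "\<dots> \<le> KR * (KB * inner (B x) x)" using KR(1) KB(2) by (intro mult_left_mono) auto
    finally show ?thesis by simp
  qed
  have Bzero: "B x = 0" if "inner (B x) x = 0" for x
    using KB(2)[of x] that by simp
  have qscale: "q (c *\<^sub>R x) = c^2 * q x" for c x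
    unfolding q_def by (simp add: linear_simps[OF linB] linear_simps[OF linR] power2_eq_square)
  have Bscale: "inner (B (c *\<^sub>R x)) (c *\<^sub>R x) = c^2 * inner (B x) x" for c x
    by (simp add: linear_simps[OF linB] power2_eq_square)
  define C where "C = {q x | x. inner (B x) x \<le> 1}"
  have "q 0 \<in> C" unfolding C_def
    by (rule CollectI, rule exI[of _ 0]) (simp add: linear_simps[OF linB])
  then have Cne: "C \<noteq> {}" by blast
  have Cbdd: "bdd_above C"
  proof (rule bdd_aboveI)
    fix y assume "y \<in> C"
    then obtain x where x: "y = q x" "inner (B x) x \<le> 1" unfolding C_def by blast
    have "q x \<le> KR * KB * inner (B x) x" by (rule qB)
    also have "\<dots> \<le> KR * KB * 1" using x(2) KR(1) KB(1) by (intro mult_left_mono) auto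
    finally show "y \<le> KR * KB" using x by simp
  qed
  define M where "M = Sup C"
  have inC: "q x \<le> M" if "inner (B x) x \<le> 1" for x
    unfolding M_def by (rule cSup_upper[OF _ Cbdd]) (use that C_def in blast)
  have key: "q x \<le> M * inner (B x) x" for x
  proof (cases "inner (B x) x = 0")
    case True
    then show ?thesis using Bzero[of x] by (simp add: q_def linear_simps[OF linR])
  next
    case False
    define a where "a = inner (B x) x"
    have ap: "a > 0" using False posB[of x] unfolding a_def by simp
    have "inner (B ((1/sqrt a) *\<^sub>R x)) ((1/sqrt a) *\<^sub>R x) = 1"
      unfolding Bscale using ap by (simp add: power_divide a_def[symmetric])
    then have "q ((1/sqrt a) *\<^sub>R x) \<le> M" by (intro inC) simp
    then have "q x / a \<le> M" using ap by (simp add: qscale power_divide)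
    then show ?thesis using ap unfolding a_def[symmetric] by (simp add: field_simps)
  qed
  have Mpos: "M > 0"
  proof -
    have "inner (B x0) x0 \<noteq> 0"
      using Bzero[of x0] x0 by (auto simp: linear_simps[OF linR])
    then have a0: "inner (B x0) x0 > 0" using posB[of x0] by simp
    have "0 < q x0" using x0 q_def by simp
    also have "\<dots> \<le> M * inner (B x0) x0" by (rule key)
    finally show ?thesis using a0 by (simp add: zero_less_mult_iff)
  qed
  define P where "P x = M *\<^sub>R B x - B (R (B x))" for x
  have linP: "bounded_linear P" unfolding P_def
    by (intro bounded_linear_sub bounded_linear_compose[OF bounded_linear_scaleR_right linB]
          bounded_linear_compose[OF linB] bounded_linear_compose[OF linR] bounded_linear_ident)
  have symP: "inner (P x) y = inner x (P y)" for x y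
    unfolding P_def by (simp add: inner_diff_left inner_diff_right symB symR)
  have posP: "0 \<le> inner (P x) x" for x
  proof -
    have "inner (P x) x = M * inner (B x) x - q x"
      unfolding P_def q_def by (simp add: inner_diff_left symB)
    then show ?thesis using key[of x] by simp
  qed
  obtain KP where KP: "KP > 0" "\<And>x. (norm (P x))^2 \<le> KP * inner (P x) x"
    using normsq_bound[OF linP symP posP] by blast
  have "\<exists>x. inner (B x) x \<le> 1 \<and> M - M / (real n + 2) < q x" for n :: nat
  proof -
    have "M - M / (real n + 2) < Sup C" using Mpos unfolding M_def[symmetric] by simp
    then obtain y where "y \<in> C" "M - M / (real n + 2) < y" using less_cSup_iff[OF Cne Cbdd] by blast
    then show ?thesis unfolding C_def by blast
  qed
  then obtain xs where xs: "\<And>n. inner (B (xs n)) (xs n) \<le> 1" "\<And>n. M - M / (real n + 2) < q (xs n)"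
    by metis
  have Pbound: "(norm (P (xs n)))^2 \<le> KP * (M / (real n + 2))" for n
  proof -
    have "inner (P (xs n)) (xs n) = M * inner (B (xs n)) (xs n) - q (xs n)"
      unfolding P_def q_def by (simp add: inner_diff_left symB)
    also have "\<dots> \<le> M - q (xs n)" using xs(1)[of n] Mpos by simp
    also have "\<dots> \<le> M / (real n + 2)" using xs(2)[of n] by simp
    finally show ?thesis using KP(1) KP(2)[of "xs n"] by (meson mult_left_mono less_imp_le order_trans)
  qed
  have lim0: "(\<lambda>n. KP * (M / (real n + 2))) \<longlonglongrightarrow> 0"
  proof -
    have "(\<lambda>n. M / (real n + 2)) \<longlonglongrightarrow> 0"
      by real_asymp
    then show ?thesis using tendsto_mult_right_zero by blast
  qed
  have "(\<lambda>n. (norm (P (xs n)))^2) \<longlonglongrightarrow> 0"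
    by (rule tendsto_sandwich[OF _ _ tendsto_const lim0]) (use Pbound in \<open>auto intro!: always_eventually\<close>)
  then have "(\<lambda>n. sqrt ((norm (P (xs n)))^2)) \<longlonglongrightarrow> sqrt 0" by (rule tendsto_real_sqrt)
  then have "(\<lambda>n. norm (P (xs n))) \<longlonglongrightarrow> 0" by simp
  then have Plim: "(\<lambda>n. P (xs n)) \<longlonglongrightarrow> 0" by (simp add: tendsto_norm_zero_iff)
  have low: "M / (2 * KR) \<le> (norm (B (xs n)))^2" for n
  proof -
    have "M / 2 \<le> M - M / (real n + 2)" using Mpos by (simp add: field_simps)
    also have "\<dots> < q (xs n)" by (rule xs(2))
    also have "\<dots> \<le> KR * (norm (B (xs n)))^2" by (rule qR)
    finally show ?thesis using KR(1) by (simp add: field_simps)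
  qed
  show ?thesis
    using Mpos Plim low KR(1) unfolding P_def
    by (intro exI[of _ M] conjI exI[of _ xs] exI[of _ "M / (2 * KR)"]) auto
qed


lemma countable_sep:
  fixes S :: "real set"
  assumes d: "\<And>s. s \<in> S \<Longrightarrow> d s > 0"
    and sep: "\<And>s1 s2. s1 \<in> S \<Longrightarrow> s2 \<in> S \<Longrightarrow> s1 \<noteq> s2 \<Longrightarrow> d s1 \<le> \<bar>s1 - s2\<bar>"
  shows "countable S"
proof -
  define g where "g s = (SOME r. r \<in> \<rat> \<and> s - d s / 2 < r \<and> r < s + d s / 2)" for s
  have g: "g s \<in> \<rat> \<and> s - d s / 2 < g s \<and> g s < s + d s / 2" if "s \<in> S" for s
  proof -
    have "s - d s / 2 < s + d s / 2" using d[OF that] by simp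
    from Rats_dense_in_real[OF this] obtain r where "r \<in> \<rat> \<and> s - d s / 2 < r \<and> r < s + d s / 2" by blast
    then show ?thesis unfolding g_def by (rule someI)
  qed
  have inj: "inj_on g S"
  proof (rule inj_onI, rule ccontr)
    fix s1 s2 assume s: "s1 \<in> S" "s2 \<in> S" "g s1 = g s2" "s1 \<noteq> s2"
    have "d s1 \<le> \<bar>s1 - s2\<bar>" "d s2 \<le> \<bar>s1 - s2\<bar>" using sep[OF s(1,2,4)] sep[OF s(2,1)] s(4) by (auto simp: abs_minus_commute)
    moreover have "\<bar>s1 - s2\<bar> < d s1 / 2 + d s2 / 2" using g[OF s(1)] g[OF s(2)] s(3) by auto
    ultimately show False by linarith
  qed
  have "g ` S \<subseteq> \<rat>" using g by blast
  then have "countable (g ` S)" using countable_rat countable_subset by blast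
  then show ?thesis using countable_image_inj_on inj by blast
qed

theorem lemma2p7:
  fixes J :: "'h::{real_inner,complete_space} \<Rightarrow> 'h"
    and D :: "'h set"
    and A B :: "'h \<Rightarrow> 'h"
  assumes "complex_structure J"
    and "self_adjoint J D A"
    and "self_adjoint J UNIV B"
    and "bounded_clinear_op J B"
    and "\<forall>x. 0 \<le> Re (cinner J (B x) x)"
    and "\<exists>x. B x \<noteq> 0"
  shows "countable {s::real. \<forall>t::real. complex_of_real s \<notin> op_spectrum J D (\<lambda>x. A x + t *\<^sub>R B x)}"
proof -
  define S where "S = {s::real. \<forall>t::real. complex_of_real s \<notin> op_spectrum J D (\<lambda>x. A x + t *\<^sub>R B x)}"
  have cre: "cscale J (complex_of_real r) x = r *\<^sub>R x" for r x by (simp add: cscale_def)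
  have linB: "bounded_linear B" using assms(4) unfolding bounded_clinear_op_def by blast
  have symB: "inner (B x) y = inner x (B y)" for x y
    using assms(3) unfolding self_adjoint_def cinner_def
    by (metis complex.sel(1) UNIV_I)
  have posB: "0 \<le> inner (B x) x" for x using assms(5) unfolding cinner_def by simp
  have clA: "clinear_on J D A" using assms(2) unfolding self_adjoint_def by blast
  have D0: "0 \<in> D" and Dadd: "\<And>x y. x \<in> D \<Longrightarrow> y \<in> D \<Longrightarrow> x + y \<in> D"
    and Dsc: "\<And>r x. x \<in> D \<Longrightarrow> r *\<^sub>R x \<in> D"
    using clA unfolding clinear_on_def csubspace_def by (auto simp: cre[symmetric])
  have Aadd: "\<And>x y. x \<in> D \<Longrightarrow> y \<in> D \<Longrightarrow> A (x + y) = A x + A y"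
    and Asc: "\<And>r x. x \<in> D \<Longrightarrow> A (r *\<^sub>R x) = r *\<^sub>R A x"
    using clA unfolding clinear_on_def by (auto simp: cre[symmetric])
  have Dsub: "x - y \<in> D" if "x \<in> D" "y \<in> D" for x y
    using Dadd[OF that(1) Dsc[OF that(2), of "-1"]] by simp
  have Asub: "A (x - y) = A x - A y" if "x \<in> D" "y \<in> D" for x y
    using Aadd[OF that(1) Dsc[OF that(2), of "-1"]] Asc[OF that(2), of "-1"] by simp
  have A0: "A 0 = 0" using Asc[OF D0, of 0] by simp
  have symA: "inner (A x) y = inner x (A y)" if "x \<in> D" "y \<in> D" for x y
    using assms(2) that unfolding self_adjoint_def cinner_def by (metis complex.sel(1))
  have inv: "\<exists>Q. bounded_linear Q \<and> (\<forall>y. Q y \<in> D \<and> A (Q y) + t *\<^sub>R B (Q y) - s *\<^sub>R Q y = y)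
      \<and> (\<forall>x\<in>D. Q (A x + t *\<^sub>R B x - s *\<^sub>R x) = x)" if "s \<in> S" for s t
  proof -
    have "complex_of_real s \<notin> op_spectrum J D (\<lambda>x. A x + t *\<^sub>R B x)" using that unfolding S_def by blast
    then show ?thesis unfolding op_spectrum_def bounded_clinear_op_def by (simp add: cre) blast
  qed
  define good where "good s R \<longleftrightarrow> bounded_linear R \<and> (\<forall>y. R y \<in> D \<and> A (R y) - s *\<^sub>R R y = y)
      \<and> (\<forall>x\<in>D. R (A x - s *\<^sub>R x) = x)" for s R
  have ex_good: "\<exists>R. good s R" if "s \<in> S" for s
    using inv[OF that, of 0] unfolding good_def by simp
  have symR: "inner (R x) y = inner x (R y)" if "good s R" for s R x y
  proof -
    have R: "R x \<in> D" "R y \<in> D" "A (R y) - s *\<^sub>R R y = y" "A (R x) - s *\<^sub>R R x = x"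
      using that unfolding good_def by auto
    have "inner (R x) y = inner (R x) (A (R y)) - s * inner (R x) (R y)"
      using R(3) by (metis inner_diff_right inner_scaleR_right)
    also have "\<dots> = inner (A (R x)) (R y) - s * inner (R x) (R y)" using symA[OF R(1,2)] by simp
    also have "\<dots> = inner (A (R x) - s *\<^sub>R R x) (R y)" by (simp add: inner_diff_left)
    finally show ?thesis using R(4) by simp
  qed
  have claim1: "inner (R (B x)) (B x) = 0" if S: "s \<in> S" and gR: "good s R" for s R x
  proof (rule ccontr)
    assume ne: "inner (R (B x)) (B x) \<noteq> 0"
    define \<sigma> :: real where "\<sigma> = sgn (inner (R (B x)) (B x))"
    have \<sigma>: "\<sigma> * \<sigma> = 1" "\<sigma> \<noteq> 0" using ne unfolding \<sigma>_def by (auto simp: sgn_if)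
    define R' where "R' v = \<sigma> *\<^sub>R R v" for v
    have linR: "bounded_linear R" using gR unfolding good_def by blast
    have linR': "bounded_linear R'" unfolding R'_def
      by (intro bounded_linear_compose[OF bounded_linear_scaleR_right linR])
    have symR': "inner (R' u) v = inner u (R' v)" for u v
      unfolding R'_def using symR[OF gR] by simp
    have pos0: "inner (R' (B x)) (B x) > 0"
      unfolding R'_def \<sigma>_def using ne by (simp add: sgn_if)
    obtain M xs c where M: "M > 0" and Plim: "(\<lambda>n. M *\<^sub>R B (xs n) - B (R' (B (xs n)))) \<longlonglongrightarrow> 0"
      and c: "c > 0" "\<And>n. c \<le> (norm (B (xs n)))^2"
      using part1[OF linB symB posB linR' symR' pos0] by blast
    define t where "t = - \<sigma> / M"
    obtain Q where linQ: "bounded_linear Q"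
      and Qinv: "\<forall>x\<in>D. Q (A x + t *\<^sub>R B x - s *\<^sub>R x) = x"
      using inv[OF S, of t] by blast
    define y where "y n = B (xs n)" for n
    define E where "E n = (1/M) *\<^sub>R (M *\<^sub>R B (xs n) - B (R' (B (xs n))))" for n
    have Elim: "E \<longlonglongrightarrow> 0" unfolding E_def
      using tendsto_scaleR[OF tendsto_const Plim, of "1/M"] by simp
    have eq: "A (R (y n)) + t *\<^sub>R B (R (y n)) - s *\<^sub>R R (y n) = E n" for n
    proof -
      have "A (R (y n)) - s *\<^sub>R R (y n) = y n" using gR unfolding good_def by blast
      moreover have "E n = y n - (\<sigma> / M) *\<^sub>R B (R (y n))"
        unfolding E_def R'_def y_def using M by (simp add: linear_simps[OF linB] algebra_simps)
      ultimately show ?thesis unfolding t_def by (simp add: algebra_simps)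
    qed
    have RD: "R (y n) \<in> D" for n using gR unfolding good_def by blast
    have zeq: "R (y n) = Q (E n)" for n using Qinv RD[of n] eq[of n] by metis
    have zlim: "(\<lambda>n. R (y n)) \<longlonglongrightarrow> 0" unfolding zeq
      by (rule bounded_linear.tendsto_zero[OF linQ Elim])
    have yeq: "y n = E n - t *\<^sub>R B (R (y n))" for n
    proof -
      have "A (R (y n)) - s *\<^sub>R R (y n) = y n" using gR unfolding good_def by blast
      then show ?thesis using eq[of n] by (simp add: algebra_simps)
    qed
    have "(\<lambda>n. E n - t *\<^sub>R B (R (y n))) \<longlonglongrightarrow> 0 - t *\<^sub>R 0"
      by (intro tendsto_intros Elim bounded_linear.tendsto_zero[OF linB zlim])
    then have "y \<longlonglongrightarrow> 0" using yeq by simp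
    then have "(\<lambda>n. (norm (y n))^2) \<longlonglongrightarrow> (norm (0::'h))^2" by (intro tendsto_intros)
    then have "\<forall>\<^sub>F n in sequentially. (norm (y n))^2 < c" using c(1) by (intro order_tendstoD(2)) auto
    then obtain n where "(norm (y n))^2 < c" by (auto simp: eventually_sequentially)
    then show False using c(2)[of n] unfolding y_def by simp
  qed
  obtain x0 where x0: "B x0 \<noteq> 0" using assms(6) by blast
  define u where "u = B x0"
  have Ru: "R u \<noteq> 0" if "good s R" for s R
  proof
    assume "R u = 0"
    moreover have "A (R u) - s *\<^sub>R R u = u" using that unfolding good_def by blast
    ultimately show False using A0 x0 u_def by simp
  qed
  have claim2: "1 \<le> \<bar>s1 - s2\<bar> * K1"
    if S: "s1 \<in> S" "s2 \<in> S" "s1 \<noteq> s2" and g1: "good s1 R1" and g2: "good s2 R2"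
      and K1: "\<And>v. norm (R1 v) \<le> norm v * K1" for s1 s2 R1 R2 K1
  proof -
    have resid: "R1 v - R2 v = (s1 - s2) *\<^sub>R R1 (R2 v)" for v
    proof -
      have D1: "R1 v \<in> D" "R2 v \<in> D" using g1 g2 unfolding good_def by auto
      have e1: "A (R1 v) - s1 *\<^sub>R R1 v = v" and e2: "A (R2 v) - s2 *\<^sub>R R2 v = v"
        using g1 g2 unfolding good_def by auto
      have "A (R1 v - R2 v) - s1 *\<^sub>R (R1 v - R2 v) = (s1 - s2) *\<^sub>R R2 v"
        using e1 e2 unfolding Asub[OF D1] by (simp add: algebra_simps)
      moreover have "R1 (A (R1 v - R2 v) - s1 *\<^sub>R (R1 v - R2 v)) = R1 v - R2 v"
        using g1 Dsub[OF D1] unfolding good_def by blast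
      moreover have "bounded_linear R1" using g1 unfolding good_def by blast
      ultimately show ?thesis by (metis linear_simps(5))
    qed
    define w1 where "w1 = R1 u"
    define w2 where "w2 = R2 u"
    have z1: "inner w1 u = 0" unfolding w1_def u_def by (rule claim1[OF S(1) g1])
    have z2: "inner w2 u = 0" unfolding w2_def u_def by (rule claim1[OF S(2) g2])
    have "inner (w1 - w2) u = (s1 - s2) * inner (R1 w2) u"
      unfolding w1_def w2_def resid by simp
    also have "\<dots> = (s1 - s2) * inner w2 w1" unfolding w1_def using symR[OF g1] by simp
    finally have "(s1 - s2) * inner w2 w1 = 0" using z1 z2 by (simp add: inner_diff_left)
    then have orth: "inner w2 w1 = 0" using S(3) by simp
    have "(norm (w1 - w2))^2 = (norm w1)^2 + (norm w2)^2"
      using orth by (simp add: power2_norm_eq_inner inner_diff_left inner_diff_right inner_commute)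
    then have "norm w2 \<le> norm (w1 - w2)" by (metis le_add_same_cancel2 zero_le_power2 norm_ge_zero power2_le_imp_le)
    also have "norm (w1 - w2) = \<bar>s1 - s2\<bar> * norm (R1 w2)" unfolding w1_def w2_def resid by simp
    also have "\<dots> \<le> \<bar>s1 - s2\<bar> * (norm w2 * K1)" by (intro mult_left_mono K1) simp
    finally have "norm w2 * 1 \<le> norm w2 * (\<bar>s1 - s2\<bar> * K1)" by (simp add: algebra_simps)
    moreover have "norm w2 > 0" using Ru[OF g2] unfolding w2_def by simp
    ultimately show ?thesis by simp
  qed
  define res where "res s = (SOME R. good s R)" for s
  have gres: "good s (res s)" if "s \<in> S" for s unfolding res_def using ex_good[OF that] by (rule someI_ex)
  have exK: "\<exists>K>0. \<forall>v. norm (res s v) \<le> norm v * K" if "s \<in> S" for s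
    using gres[OF that] unfolding good_def using bounded_linear.pos_bounded by blast
  define K where "K s = (SOME K. K > 0 \<and> (\<forall>v. norm (res s v) \<le> norm v * K))" for s
  have K: "K s > 0 \<and> (\<forall>v. norm (res s v) \<le> norm v * K s)" if "s \<in> S" for s
    unfolding K_def using exK[OF that] by (rule someI_ex)
  have "countable S"
  proof (rule countable_sep[where d = "\<lambda>s. 1 / K s"])
    fix s assume "s \<in> S" then show "1 / K s > 0" using K by simp
  next
    fix s1 s2 assume s: "s1 \<in> S" "s2 \<in> S" "s1 \<noteq> s2"
    have "1 \<le> \<bar>s1 - s2\<bar> * K s1"
      using claim2[OF s gres[OF s(1)] gres[OF s(2)]] K[OF s(1)] by blast
    then show "1 / K s1 \<le> \<bar>s1 - s2\<bar>" using K[OF s(1)] by (simp add: field_simps)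
  qed
  then show ?thesis unfolding S_def .
qed

end
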